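(* Let $f\colon Y\to X$ be a generic map between path connected spaces, let $\dagger\in Y$ and write $*=f(\dagger)$. Then $f_*\colon\pi_1(Y,\dagger)\to\pi_1(X,* )$ is a split epimorphism. Consequently, the biset $B=B(f,\dagger,* )$ of $f$ is right-principal and left-invertible, namely $B^\vee\otimes_{\pi_1(Y,\dagger)}B\cong\pi_1(X,* )$ as $\pi_1(X,* )$-$\pi_1(X,* )$-bisets (the latter with actions by left and right multiplication).
   Context: A continuous map $f\colon Y\to X$ is generic if there exists a continuous map $g\colon X\to Y$ such that $f\circ g$ is isotopic to the identity of $X$. The biset $B(f,\dagger,* )$ is the set of homotopy classes rel endpoints of paths in $X$ from $f(\dagger)$ to $*$, a $\pi_1(Y,\dagger)$-$\pi_1(X,* )$-biset via $[\lambda]\cdot[\gamma]=[f\circ\lambda\#\gamma]$ and $[\gamma]\cdot[\mu]=[\gamma\#\mu]$. A biset is right-principal if the right action is simply transitive. The contragredient $B^\vee$ of an $H$-$G$-biset is the $G$-$H$-biset with the same set and actions $g\cdot\check b\cdot h=(h^{-1}bg^{-1})\check{}$; $\otimes_H$ denotes the product $B\times C/(bh,c)=(b,hc)$. *)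

theory Defs
  imports "HOL-Analysis.Analysis" "HOL-Algebra.Group"
begin

text \<open>Concatenation of paths (first p, then q); same formula as joinpaths, but for
  arbitrary (abstract) topological spaces.\<close>
definition pconcat :: "(real \<Rightarrow> 'a) \<Rightarrow> (real \<Rightarrow> 'a) \<Rightarrow> real \<Rightarrow> 'a" where
  "pconcat p q = (\<lambda>t. if t \<le> 1/2 then p (2 * t) else q (2 * t - 1))"

definition paths_between :: "'a topology \<Rightarrow> 'a \<Rightarrow> 'a \<Rightarrow> (real \<Rightarrow> 'a) set" where
  "paths_between X a b = {p. pathin X p \<and> p 0 = a \<and> p 1 = b}"

definition homotopic_paths_in :: "'a topology \<Rightarrow> (real \<Rightarrow> 'a) \<Rightarrow> (real \<Rightarrow> 'a) \<Rightarrow> bool" where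
  "homotopic_paths_in X p q =
     homotopic_with (\<lambda>h. h 0 = p 0 \<and> h 1 = p 1) (top_of_set {0..1}) X p q"

definition path_class :: "'a topology \<Rightarrow> (real \<Rightarrow> 'a) \<Rightarrow> (real \<Rightarrow> 'a) set" where
  "path_class X p = {q. homotopic_paths_in X p q}"

definition class_mult :: "'a topology \<Rightarrow> (real \<Rightarrow> 'a) set \<Rightarrow> (real \<Rightarrow> 'a) set \<Rightarrow> (real \<Rightarrow> 'a) set" where
  "class_mult X A B = \<Union>{path_class X (pconcat p q) | p q. p \<in> A \<and> q \<in> B}"

definition fundamental_group :: "'a topology \<Rightarrow> 'a \<Rightarrow> ((real \<Rightarrow> 'a) set) monoid" where
  "fundamental_group X a =
     \<lparr>carrier = path_class X ` paths_between X a a,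
      monoid.mult = class_mult X,
      one = path_class X (\<lambda>t. a)\<rparr>"

definition induced_map :: "'a topology \<Rightarrow> ('b \<Rightarrow> 'a) \<Rightarrow> (real \<Rightarrow> 'b) set \<Rightarrow> (real \<Rightarrow> 'a) set" where
  "induced_map X f A = \<Union>{path_class X (f \<circ> p) | p. p \<in> A}"

text \<open>Generic maps: f : Y \<rightarrow> X continuous, and there is a continuous g : X \<rightarrow> Y
  with f \<circ> g isotopic (homotopic through homeomorphisms) to the identity of X.\<close>
definition generic_map :: "'b topology \<Rightarrow> 'a topology \<Rightarrow> ('b \<Rightarrow> 'a) \<Rightarrow> bool" where
  "generic_map Y X f \<longleftrightarrow> continuous_map Y X f \<and>
     (\<exists>g. continuous_map X Y g \<and>
          homotopic_with (\<lambda>h. homeomorphic_map X X h) X X (f \<circ> g) id)"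

text \<open>A biset given by a set S, a left action l of H and a right action r of G.\<close>

definition map_biset_set :: "'a topology \<Rightarrow> ('b \<Rightarrow> 'a) \<Rightarrow> 'b \<Rightarrow> 'a \<Rightarrow> (real \<Rightarrow> 'a) set set" where
  "map_biset_set X f dag star = path_class X ` paths_between X (f dag) star"

definition map_biset_left :: "'a topology \<Rightarrow> ('b \<Rightarrow> 'a) \<Rightarrow> (real \<Rightarrow> 'b) set \<Rightarrow> (real \<Rightarrow> 'a) set \<Rightarrow> (real \<Rightarrow> 'a) set" where
  "map_biset_left X f L C = \<Union>{path_class X (pconcat (f \<circ> p) q) | p q. p \<in> L \<and> q \<in> C}"

definition map_biset_right :: "'a topology \<Rightarrow> (real \<Rightarrow> 'a) set \<Rightarrow> (real \<Rightarrow> 'a) set \<Rightarrow> (real \<Rightarrow> 'a) set" where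
  "map_biset_right X C M = \<Union>{path_class X (pconcat q m) | q m. q \<in> C \<and> m \<in> M}"

definition right_principal :: "('g, 'm) monoid_scheme \<Rightarrow> 's set \<Rightarrow> ('s \<Rightarrow> 'g \<Rightarrow> 's) \<Rightarrow> bool" where
  "right_principal G S r \<longleftrightarrow> (\<forall>s\<in>S. \<forall>s'\<in>S. \<exists>!g. g \<in> carrier G \<and> r s g = s')"

definition contra_left :: "('g, 'm) monoid_scheme \<Rightarrow> ('s \<Rightarrow> 'g \<Rightarrow> 's) \<Rightarrow> 'g \<Rightarrow> 's \<Rightarrow> 's" where
  "contra_left G r g b = r b (inv\<^bsub>G\<^esub> g)"

definition contra_right :: "('h, 'n) monoid_scheme \<Rightarrow> ('h \<Rightarrow> 's \<Rightarrow> 's) \<Rightarrow> 's \<Rightarrow> 'h \<Rightarrow> 's" where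
  "contra_right H l b h = l (inv\<^bsub>H\<^esub> h) b"

definition tensor_rel :: "('h, 'n) monoid_scheme \<Rightarrow> 's set \<Rightarrow> ('s \<Rightarrow> 'h \<Rightarrow> 's) \<Rightarrow>
    't set \<Rightarrow> ('h \<Rightarrow> 't \<Rightarrow> 't) \<Rightarrow> (('s \<times> 't) \<times> ('s \<times> 't)) set" where
  "tensor_rel H S r1 T l2 =
     ({((r1 b h, c), (b, l2 h c)) | b c h. b \<in> S \<and> c \<in> T \<and> h \<in> carrier H} \<union>
      {((r1 b h, c), (b, l2 h c)) | b c h. b \<in> S \<and> c \<in> T \<and> h \<in> carrier H}\<inverse>)\<^sup>*"

definition tensor_set :: "('h, 'n) monoid_scheme \<Rightarrow> 's set \<Rightarrow> ('s \<Rightarrow> 'h \<Rightarrow> 's) \<Rightarrow>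
    't set \<Rightarrow> ('h \<Rightarrow> 't \<Rightarrow> 't) \<Rightarrow> ('s \<times> 't) set set" where
  "tensor_set H S r1 T l2 = (S \<times> T) // tensor_rel H S r1 T l2"

definition tensor_left :: "('h, 'n) monoid_scheme \<Rightarrow> 's set \<Rightarrow> ('s \<Rightarrow> 'h \<Rightarrow> 's) \<Rightarrow>
    't set \<Rightarrow> ('h \<Rightarrow> 't \<Rightarrow> 't) \<Rightarrow> ('g \<Rightarrow> 's \<Rightarrow> 's) \<Rightarrow> 'g \<Rightarrow> ('s \<times> 't) set \<Rightarrow> ('s \<times> 't) set" where
  "tensor_left H S r1 T l2 l1 g E =
     \<Union>{tensor_rel H S r1 T l2 `` {(l1 g b, c)} | b c. (b, c) \<in> E}"

definition tensor_right :: "('h, 'n) monoid_scheme \<Rightarrow> 's set \<Rightarrow> ('s \<Rightarrow> 'h \<Rightarrow> 's) \<Rightarrow>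
    't set \<Rightarrow> ('h \<Rightarrow> 't \<Rightarrow> 't) \<Rightarrow> ('t \<Rightarrow> 'k \<Rightarrow> 't) \<Rightarrow> ('s \<times> 't) set \<Rightarrow> 'k \<Rightarrow> ('s \<times> 't) set" where
  "tensor_right H S r1 T l2 r2 E k =
     \<Union>{tensor_rel H S r1 T l2 `` {(b, r2 c k)} | b c. (b, c) \<in> E}"

definition biset_iso :: "('g, 'm) monoid_scheme \<Rightarrow> ('k, 'n) monoid_scheme \<Rightarrow>
    's set \<Rightarrow> ('g \<Rightarrow> 's \<Rightarrow> 's) \<Rightarrow> ('s \<Rightarrow> 'k \<Rightarrow> 's) \<Rightarrow>
    't set \<Rightarrow> ('g \<Rightarrow> 't \<Rightarrow> 't) \<Rightarrow> ('t \<Rightarrow> 'k \<Rightarrow> 't) \<Rightarrow> ('s \<Rightarrow> 't) \<Rightarrow> bool" where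
  "biset_iso G K S l r S' l' r' \<phi> \<longleftrightarrow> bij_betw \<phi> S S' \<and>
     (\<forall>g\<in>carrier G. \<forall>s\<in>S. \<phi> (l g s) = l' g (\<phi> s)) \<and>
     (\<forall>k\<in>carrier K. \<forall>s\<in>S. \<phi> (r s k) = r' (\<phi> s) k)"

end

theory Submission
  imports Defs
begin


lemma pathin_pconcat:
  assumes "pathin X p" "pathin X q" "p 1 = q 0"
  shows "pathin X (pconcat p q)"
  unfolding pathin_def pconcat_def
proof (rule continuous_map_cases_le)
  let ?I = "subtopology euclideanreal {0..1::real}"
  show "continuous_map ?I euclideanreal (\<lambda>x. x)"
    by (simp add: continuous_map_from_subtopology)
  show "continuous_map ?I euclideanreal (\<lambda>x. 1/2)" by simp
  have "continuous_map (subtopology ?I {x \<in> topspace ?I. x \<le> 1/2}) ?I (\<lambda>t. 2*t)"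
    by (intro continuous_map_into_subtopology continuous_map_from_subtopology continuous_intros) auto
  then show "continuous_map (subtopology ?I {x \<in> topspace ?I. x \<le> 1/2}) X (\<lambda>t. p (2*t))"
    using assms(1) unfolding pathin_def by (rule continuous_map_compose[unfolded o_def])
  have "continuous_map (subtopology ?I {x \<in> topspace ?I. 1/2 \<le> x}) ?I (\<lambda>t. 2*t-1)"
    by (intro continuous_map_into_subtopology continuous_map_from_subtopology continuous_intros) auto
  then show "continuous_map (subtopology ?I {x \<in> topspace ?I. 1/2 \<le> x}) X (\<lambda>t. q (2*t-1))"
    using assms(2) unfolding pathin_def by (rule continuous_map_compose[unfolded o_def])
  show "p (2*x) = q (2*x-1)" if "x \<in> topspace ?I" "x = 1/2" for x using assms by (simp add: that(2))
qed

lemma hp_imp: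
  assumes "homotopic_paths_in X p q"
  shows "pathin X p \<and> pathin X q \<and> q 0 = p 0 \<and> q 1 = p 1"
  using homotopic_with_imp_continuous_maps[OF assms[unfolded homotopic_paths_in_def]]
    homotopic_with_imp_property[OF assms[unfolded homotopic_paths_in_def]]
  by (simp add: pathin_def)

lemma hp_refl: "pathin X p \<Longrightarrow> homotopic_paths_in X p p"
  by (simp add: homotopic_paths_in_def pathin_def)

lemma hp_sym: assumes "homotopic_paths_in X p q" shows "homotopic_paths_in X q p"
proof -
  have e: "q 0 = p 0" "q 1 = p 1" using hp_imp[OF assms] by auto
  show ?thesis using assms unfolding homotopic_paths_in_def e
    by (simp add: homotopic_with_sym)
qed

lemma hp_trans: assumes "homotopic_paths_in X p q" "homotopic_paths_in X q r"
  shows "homotopic_paths_in X p r"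
proof -
  have e: "q 0 = p 0" "q 1 = p 1" using hp_imp[OF assms(1)] by auto
  show ?thesis using assms unfolding homotopic_paths_in_def e
    using homotopic_with_trans by blast
qed

lemma hp_eq:
  assumes "pathin X p" "\<And>t. t \<in> {0..1} \<Longrightarrow> p t = q t"
  shows "homotopic_paths_in X p q"
  unfolding homotopic_paths_in_def
  by (rule homotopic_with_equal) (use assms in \<open>auto simp: pathin_def\<close>)

lemma hp_compose:
  assumes "homotopic_paths_in X p q" "continuous_map X Z f"
  shows "homotopic_paths_in Z (f \<circ> p) (f \<circ> q)"
  using homotopic_with_compose_continuous_map_left[OF assms[unfolded homotopic_paths_in_def]]
  unfolding homotopic_paths_in_def by auto

lemma hp_convex:
  fixes \<alpha> \<beta> :: "real \<Rightarrow> 'v::real_normed_vector"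
  assumes "convex S" "continuous_map (top_of_set S) X K" "path \<alpha>" "path \<beta>"
    "\<alpha> ` {0..1} \<subseteq> S" "\<beta> ` {0..1} \<subseteq> S" "\<alpha> 0 = \<beta> 0" "\<alpha> 1 = \<beta> 1"
  shows "homotopic_paths_in X (K \<circ> \<alpha>) (K \<circ> \<beta>)"
proof -
  have "homotopic_paths S \<alpha> \<beta>"
  proof (rule homotopic_paths_linear)
    show "closed_segment (\<alpha> t) (\<beta> t) \<subseteq> S" if "t \<in> {0..1}" for t
      using assms that by (intro closed_segment_subset) auto
  qed (use assms in \<open>auto simp: pathstart_def pathfinish_def\<close>)
  then have "homotopic_with (\<lambda>r. r 0 = \<alpha> 0 \<and> r 1 = \<alpha> 1) (top_of_set {0..1}) (top_of_set S) \<alpha> \<beta>"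
    by (simp add: homotopic_paths_def pathstart_def pathfinish_def)
  from homotopic_with_compose_continuous_map_left[OF this assms(2)]
  show ?thesis unfolding homotopic_paths_in_def by auto
qed

lemma hp_reparam:
  assumes "pathin X k" "continuous_on {0..1} \<phi>" "continuous_on {0..1} \<psi>"
    "\<phi> ` {0..1} \<subseteq> {0..1}" "\<psi> ` {0..1} \<subseteq> {0..1}" "\<phi> 0 = \<psi> 0" "\<phi> 1 = \<psi> 1"
    "\<And>s. s \<in> {0..1} \<Longrightarrow> p s = k (\<phi> s)" "\<And>s. s \<in> {0..1} \<Longrightarrow> q s = k (\<psi> s)"
  shows "homotopic_paths_in X p q"
proof -
  have h: "homotopic_paths_in X (k \<circ> \<phi>) (k \<circ> \<psi>)"
    by (rule hp_convex[where S="{0..1}"]) (use assms in \<open>auto simp: pathin_def path_def\<close>)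
  have "homotopic_paths_in X (k \<circ> \<phi>) p"
    by (rule hp_eq) (use hp_imp[OF h] assms in auto)
  moreover have "homotopic_paths_in X (k \<circ> \<psi>) q"
    by (rule hp_eq) (use hp_imp[OF h] assms in auto)
  ultimately show ?thesis using h hp_sym hp_trans by blast
qed

lemma hp_concat:
  assumes "homotopic_paths_in X p p'" "homotopic_paths_in X q q'" "p 1 = q 0"
  shows "homotopic_paths_in X (pconcat p q) (pconcat p' q')"
proof -
  let ?I = "top_of_set {0..1::real}"
  let ?X01 = "prod_topology ?I ?I"
  obtain k1 where k1: "continuous_map ?X01 X k1" "\<forall>x. k1 (0, x) = p x" "\<forall>x. k1 (1, x) = p' x"
     "\<forall>t\<in>{0..1}. k1 (t, 0) = p 0 \<and> k1 (t, 1) = p 1"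
    using assms(1) unfolding homotopic_paths_in_def homotopic_with_def by auto
  obtain k2 where k2: "continuous_map ?X01 X k2" "\<forall>x. k2 (0, x) = q x" "\<forall>x. k2 (1, x) = q' x"
     "\<forall>t\<in>{0..1}. k2 (t, 0) = q 0 \<and> k2 (t, 1) = q 1"
    using assms(2) unfolding homotopic_paths_in_def homotopic_with_def by auto
  define k where "k \<equiv> \<lambda>y. if snd y \<le> 1/2
                             then (k1 \<circ> (\<lambda>x. (fst x, 2 * snd x))) y
                             else (k2 \<circ> (\<lambda>x. (fst x, 2 * snd x - 1))) y"
  have snd: "continuous_map ?X01 euclideanreal snd"
    using continuous_map_snd continuous_map_in_subtopology by blast
  have fst: "continuous_map ?X01 euclideanreal fst"
    using continuous_map_fst continuous_map_in_subtopology by blast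
  show ?thesis
    unfolding homotopic_paths_in_def homotopic_with_def
  proof (intro exI conjI)
    show "continuous_map ?X01 X k"
      unfolding k_def
    proof (rule continuous_map_cases_le)
      show "continuous_map ?X01 euclideanreal snd" by (rule snd)
      show "continuous_map ?X01 euclideanreal (\<lambda>x. 1/2)"
        by simp
      show "continuous_map (subtopology ?X01 {y \<in> topspace ?X01. snd y \<le> 1/2}) X
               (k1 \<circ> (\<lambda>x. (fst x, 2 * snd x)))"
        apply (intro fst snd continuous_map_compose [OF _ k1(1)] continuous_intros continuous_map_into_subtopology continuous_map_from_subtopology | simp)+
        by (force simp: prod_topology_subtopology)
      show "continuous_map (subtopology ?X01 {y \<in> topspace ?X01. 1/2 \<le> snd y}) X
               (k2 \<circ> (\<lambda>x. (fst x, 2 * snd x - 1)))"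
        apply (intro fst snd continuous_map_compose [OF _ k2(1)] continuous_intros continuous_map_into_subtopology continuous_map_from_subtopology | simp)+
        by (force simp: prod_topology_subtopology)
      show "(k1 \<circ> (\<lambda>x. (fst x, 2 * snd x))) y = (k2 \<circ> (\<lambda>x. (fst x, 2 * snd x - 1))) y"
        if "y \<in> topspace ?X01" and "snd y = 1/2" for y
      proof -
        have y: "y = (fst y, 1/2)" using that(2) by (metis prod.collapse)
        have a: "fst y \<in> {0..1}" using that(1) by auto
        show ?thesis using k1(4) k2(4) assms(3) a by (simp add: that(2))
      qed
    qed
    show "\<forall>x. k (0, x) = pconcat p q x"
      by (simp add: k1 k2 k_def pconcat_def)
    show "\<forall>x. k (1, x) = pconcat p' q' x"
      by (simp add: k1 k2 k_def pconcat_def)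
    show "\<forall>t\<in>{0..1}. (\<lambda>x. k (t, x)) 0 = pconcat p q 0 \<and> (\<lambda>x. k (t, x)) 1 = pconcat p q 1"
      using k1(4) k2(4) by (simp add: k_def pconcat_def)
  qed
qed

definition prev :: "(real \<Rightarrow> 'a) \<Rightarrow> real \<Rightarrow> 'a" where "prev p = (\<lambda>t. p (1 - t))"

lemma pathin_prev: assumes "pathin X p" shows "pathin X (prev p)"
proof -
  have "continuous_map (top_of_set {0..1}) (top_of_set {0..1::real}) (\<lambda>t. 1 - t)"
    by (intro continuous_map_into_subtopology continuous_map_from_subtopology continuous_intros) auto
  then show ?thesis using assms unfolding pathin_def prev_def
    by (rule continuous_map_compose[unfolded o_def])
qed

lemma prev_simps[simp]: "prev p 0 = p 1" "prev p 1 = p 0"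
  by (auto simp: prev_def)

lemma pconcat_simps[simp]: "pconcat p q 0 = p 0" "pconcat p q 1 = q 1"
  by (auto simp: pconcat_def)

lemma hp_assoc:
  assumes "pathin X p" "pathin X q" "pathin X r" "p 1 = q 0" "q 1 = r 0"
  shows "homotopic_paths_in X (pconcat (pconcat p q) r) (pconcat p (pconcat q r))"
proof (rule hp_reparam[where k="pconcat (pconcat p q) r" and \<phi>="\<lambda>s. s"
      and \<psi>="\<lambda>s. max (s/2) (max (s-1/4) (2* s-1))"])
  show "pathin X (pconcat (pconcat p q) r)" using assms by (simp add: pathin_pconcat)
  show "continuous_on {0..1} (\<lambda>s::real. max (s/2) (max (s-1/4) (2* s-1)))"
    by (intro continuous_intros) auto
  show "(\<lambda>s::real. max (s/2) (max (s-1/4) (2* s-1))) ` {0..1} \<subseteq> {0..1}"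
    by (auto simp: max_def)
  fix s :: real assume s: "s \<in> {0..1}"
  consider "s < 1/2" | "s = 1/2" | "1/2 < s \<and> s < 3/4" | "s = 3/4" | "3/4 < s" by linarith
  then show "pconcat p (pconcat q r) s = pconcat (pconcat p q) r (max (s/2) (max (s-1/4) (2 * s-1)))"
  proof cases
    case 1 then show ?thesis by (simp add: pconcat_def max_def)
  next
    case 2 then have e: "s = 1/2" .
    show ?thesis unfolding e by (simp add: pconcat_def max_def)
  next
    case 3
    then have "max (s/2) (max (s-1/4) (2 * s-1)) = s - 1/4" by (simp add: max_def)
    then show ?thesis using 3 by (simp add: pconcat_def algebra_simps)
  next
    case 4 then have e: "s = 3/4" .
    show ?thesis unfolding e using assms by (simp add: pconcat_def max_def)
  next
    case 5
    then have "max (s/2) (max (s-1/4) (2 * s-1)) = 2 * s-1" by (simp add: max_def)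
    then show ?thesis using 5 by (simp add: pconcat_def algebra_simps)
  qed
qed auto

lemma hp_lid:
  assumes "pathin X p"
  shows "homotopic_paths_in X (pconcat (\<lambda>_. p 0) p) p"
proof (rule hp_reparam[where k=p and \<phi>="\<lambda>s. max 0 (2 * s-1)" and \<psi>="\<lambda>s. s"])
  show "continuous_on {0..1} (\<lambda>s::real. max 0 (2 * s-1))" by (intro continuous_intros)
  fix s :: real assume "s \<in> {0..1}"
  consider "s < 1/2" | "s = 1/2" | "s > 1/2" by linarith
  then show "pconcat (\<lambda>_. p 0) p s = p (max 0 (2 * s-1))"
  proof cases
    case 2 then have e: "s = 1/2" .
    show ?thesis unfolding e by (simp add: pconcat_def max_def)
  qed (auto simp: pconcat_def max_def)
qed (use assms in \<open>auto simp: max_def\<close>)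

lemma hp_rid:
  assumes "pathin X p"
  shows "homotopic_paths_in X (pconcat p (\<lambda>_. p 1)) p"
proof (rule hp_reparam[where k=p and \<phi>="\<lambda>s. min 1 (2 * s)" and \<psi>="\<lambda>s. s"])
  show "continuous_on {0..1} (\<lambda>s::real. min 1 (2 * s))" by (intro continuous_intros)
  fix s :: real assume "s \<in> {0..1}"
  consider "s < 1/2" | "s = 1/2" | "s > 1/2" by linarith
  then show "pconcat p (\<lambda>_. p 1) s = p (min 1 (2 * s))"
  proof cases
    case 2 then have e: "s = 1/2" .
    show ?thesis unfolding e by (simp add: pconcat_def min_def)
  qed (auto simp: pconcat_def min_def)
qed (use assms in \<open>auto simp: min_def\<close>)

lemma hp_rinv:
  assumes "pathin X p"
  shows "homotopic_paths_in X (pconcat p (prev p)) (\<lambda>_. p 0)"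
proof (rule hp_reparam[where k=p and \<phi>="\<lambda>s. min (2 * s) (2 - 2 * s)" and \<psi>="\<lambda>s. 0"])
  show "continuous_on {0..1} (\<lambda>s::real. min (2 * s) (2 - 2 * s))" by (intro continuous_intros)
  fix s :: real assume "s \<in> {0..1}"
  consider "s < 1/2" | "s = 1/2" | "s > 1/2" by linarith
  then show "pconcat p (prev p) s = p (min (2 * s) (2 - 2 * s))"
  proof cases
    case 2 then have e: "s = 1/2" .
    show ?thesis unfolding e by (simp add: pconcat_def prev_def min_def)
  qed (auto simp: pconcat_def prev_def min_def)
qed (use assms in \<open>auto simp: min_def\<close>)

lemma hp_linv:
  assumes "pathin X p"
  shows "homotopic_paths_in X (pconcat (prev p) p) (\<lambda>_. p 1)"
proof (rule hp_reparam[where k=p and \<phi>="\<lambda>s. \<bar>2 * s-1\<bar>" and \<psi>="\<lambda>s. 1"])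
  show "continuous_on {0..1} (\<lambda>s::real. \<bar>2 * s-1\<bar>)" by (intro continuous_intros)
  fix s :: real assume "s \<in> {0..1}"
  consider "s < 1/2" | "s = 1/2" | "s > 1/2" by linarith
  then show "pconcat (prev p) p s = p (\<bar>2 * s-1\<bar>)"
  proof cases
    case 2 then have e: "s = 1/2" .
    show ?thesis unfolding e by (simp add: pconcat_def prev_def)
  qed (auto simp: pconcat_def prev_def)
qed (use assms in \<open>auto simp: abs_if\<close>)




lemma path_class_eq:
  assumes "homotopic_paths_in X p q" shows "path_class X p = path_class X q"
  using assms hp_sym hp_trans unfolding path_class_def by blast

lemma self_in_class: "pathin X p \<Longrightarrow> p \<in> path_class X p"
  by (simp add: path_class_def hp_refl)

lemma class_mult_class:
  assumes "pathin X p" "pathin X q" "p 1 = q 0"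
  shows "class_mult X (path_class X p) (path_class X q) = path_class X (pconcat p q)"
proof
  show "class_mult X (path_class X p) (path_class X q) \<subseteq> path_class X (pconcat p q)"
  proof
    fix r assume "r \<in> class_mult X (path_class X p) (path_class X q)"
    then obtain p' q' where "homotopic_paths_in X p p'" "homotopic_paths_in X q q'"
      "r \<in> path_class X (pconcat p' q')"
      unfolding class_mult_def path_class_def by auto
    then show "r \<in> path_class X (pconcat p q)"
      using hp_concat[of X p p' q q'] assms hp_trans unfolding path_class_def by blast
  qed
  show "path_class X (pconcat p q) \<subseteq> class_mult X (path_class X p) (path_class X q)"
    unfolding class_mult_def using self_in_class assms by blast
qed

lemma induced_class:
  assumes "continuous_map Y X f" "pathin Y p"
  shows "induced_map X f (path_class Y p) = path_class X (f \<circ> p)"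
proof
  show "induced_map X f (path_class Y p) \<subseteq> path_class X (f \<circ> p)"
  proof
    fix r assume "r \<in> induced_map X f (path_class Y p)"
    then obtain p' where "homotopic_paths_in Y p p'" "r \<in> path_class X (f \<circ> p')"
      unfolding induced_map_def path_class_def by auto
    then show "r \<in> path_class X (f \<circ> p)"
      using hp_compose[OF _ assms(1)] hp_trans unfolding path_class_def by blast
  qed
  show "path_class X (f \<circ> p) \<subseteq> induced_map X f (path_class Y p)"
    unfolding induced_map_def using self_in_class assms by blast
qed

lemma biset_left_class:
  assumes "continuous_map Y X f" "pathin Y p" "pathin X q" "f (p 1) = q 0"
  shows "map_biset_left X f (path_class Y p) (path_class X q) = path_class X (pconcat (f \<circ> p) q)"
proof
  show "map_biset_left X f (path_class Y p) (path_class X q) \<subseteq> path_class X (pconcat (f \<circ> p) q)"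
  proof
    fix r assume "r \<in> map_biset_left X f (path_class Y p) (path_class X q)"
    then obtain p' q' where "homotopic_paths_in Y p p'" "homotopic_paths_in X q q'"
      "r \<in> path_class X (pconcat (f \<circ> p') q')"
      unfolding map_biset_left_def path_class_def mem_Collect_eq by blast
    note h = this
    have "homotopic_paths_in X (f \<circ> p) (f \<circ> p')" by (rule hp_compose[OF h(1) assms(1)])
    then have "homotopic_paths_in X (pconcat (f \<circ> p) q) (pconcat (f \<circ> p') q')"
      by (rule hp_concat[OF _ h(2)]) (simp add: assms(4))
    then show "r \<in> path_class X (pconcat (f \<circ> p) q)"
      using h(3) hp_trans unfolding path_class_def by blast
  qed
  show "path_class X (pconcat (f \<circ> p) q) \<subseteq> map_biset_left X f (path_class Y p) (path_class X q)"
  proof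
    fix r assume r: "r \<in> path_class X (pconcat (f \<circ> p) q)"
    have "p \<in> path_class Y p" "q \<in> path_class X q" using self_in_class assms by auto
    then show "r \<in> map_biset_left X f (path_class Y p) (path_class X q)"
      unfolding map_biset_left_def using r by blast
  qed
qed

lemma carrier_fg: "carrier (fundamental_group X a) = path_class X ` paths_between X a a"
  by (simp add: fundamental_group_def)

lemma mult_fg: "mult (fundamental_group X a) = class_mult X"
  by (simp add: fundamental_group_def)

lemma one_fg: "one (fundamental_group X a) = path_class X (\<lambda>t. a)"
  by (simp add: fundamental_group_def)

lemma paths_between_iff: "p \<in> paths_between X a b \<longleftrightarrow> pathin X p \<and> p 0 = a \<and> p 1 = b"
  by (simp add: paths_between_def)

lemma loop_class_cases:
  assumes "x \<in> carrier (fundamental_group X a)"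
  obtains p where "pathin X p" "p 0 = a" "p 1 = a" "x = path_class X p"
  using assms by (auto simp: carrier_fg paths_between_iff)

lemma loop_class_in:
  "pathin X p \<Longrightarrow> p 0 = a \<Longrightarrow> p 1 = a \<Longrightarrow> path_class X p \<in> carrier (fundamental_group X a)"
  by (auto simp: carrier_fg paths_between_iff)

lemma fg_group:
  assumes "a \<in> topspace X"
  shows "group (fundamental_group X a)"
proof (rule groupI)
  fix x y assume "x \<in> carrier (fundamental_group X a)" "y \<in> carrier (fundamental_group X a)"
  then obtain p q where pq: "pathin X p" "p 0 = a" "p 1 = a" "x = path_class X p"
    "pathin X q" "q 0 = a" "q 1 = a" "y = path_class X q"
    by (metis loop_class_cases)
  then have "x \<otimes>\<^bsub>fundamental_group X a\<^esub> y = path_class X (pconcat p q)"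
    by (simp add: mult_fg class_mult_class)
  then show "x \<otimes>\<^bsub>fundamental_group X a\<^esub> y \<in> carrier (fundamental_group X a)"
    using pq by (simp add: loop_class_in pathin_pconcat)
next
  show "\<one>\<^bsub>fundamental_group X a\<^esub> \<in> carrier (fundamental_group X a)"
    using assms by (simp add: one_fg loop_class_in)
next
  fix x y z assume "x \<in> carrier (fundamental_group X a)" "y \<in> carrier (fundamental_group X a)"
    "z \<in> carrier (fundamental_group X a)"
  then obtain p q r where pq: "pathin X p" "p 0 = a" "p 1 = a" "x = path_class X p"
    "pathin X q" "q 0 = a" "q 1 = a" "y = path_class X q"
    "pathin X r" "r 0 = a" "r 1 = a" "z = path_class X r"
    by (metis loop_class_cases)
  have "x \<otimes>\<^bsub>fundamental_group X a\<^esub> y \<otimes>\<^bsub>fundamental_group X a\<^esub> z =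
        path_class X (pconcat (pconcat p q) r)"
    using pq by (simp add: mult_fg class_mult_class pathin_pconcat)
  also have "\<dots> = path_class X (pconcat p (pconcat q r))"
    using pq by (intro path_class_eq hp_assoc) auto
  also have "\<dots> = x \<otimes>\<^bsub>fundamental_group X a\<^esub> (y \<otimes>\<^bsub>fundamental_group X a\<^esub> z)"
    using pq by (simp add: mult_fg class_mult_class pathin_pconcat)
  finally show "x \<otimes>\<^bsub>fundamental_group X a\<^esub> y \<otimes>\<^bsub>fundamental_group X a\<^esub> z =
           x \<otimes>\<^bsub>fundamental_group X a\<^esub> (y \<otimes>\<^bsub>fundamental_group X a\<^esub> z)" .
next
  fix x assume "x \<in> carrier (fundamental_group X a)"
  then obtain p where p: "pathin X p" "p 0 = a" "p 1 = a" "x = path_class X p"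
    by (metis loop_class_cases)
  have "\<one>\<^bsub>fundamental_group X a\<^esub> \<otimes>\<^bsub>fundamental_group X a\<^esub> x = path_class X (pconcat (\<lambda>_. p 0) p)"
    using p assms by (simp add: mult_fg one_fg class_mult_class)
  also have "\<dots> = x" using p hp_lid[of X p] path_class_eq by metis
  finally show "\<one>\<^bsub>fundamental_group X a\<^esub> \<otimes>\<^bsub>fundamental_group X a\<^esub> x = x" .
  show "\<exists>y\<in>carrier (fundamental_group X a). y \<otimes>\<^bsub>fundamental_group X a\<^esub> x = \<one>\<^bsub>fundamental_group X a\<^esub>"
  proof (intro bexI)
    show "path_class X (prev p) \<in> carrier (fundamental_group X a)"
      using p by (simp add: loop_class_in pathin_prev)
    have "path_class X (prev p) \<otimes>\<^bsub>fundamental_group X a\<^esub> x = path_class X (pconcat (prev p) p)"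
      using p by (simp add: mult_fg class_mult_class pathin_prev)
    also have "\<dots> = \<one>\<^bsub>fundamental_group X a\<^esub>"
      using p hp_linv[of X p] path_class_eq by (metis one_fg)
    finally show "path_class X (prev p) \<otimes>\<^bsub>fundamental_group X a\<^esub> x = \<one>\<^bsub>fundamental_group X a\<^esub>" .
  qed
qed


lemma comp_pconcat: "f \<circ> pconcat p q = pconcat (f \<circ> p) (f \<circ> q)"
  by (auto simp: pconcat_def fun_eq_iff)

lemma comp_prev: "f \<circ> prev p = prev (f \<circ> p)"
  by (auto simp: prev_def fun_eq_iff)

lemma induced_hom:
  assumes "continuous_map Y X f" "b \<in> topspace Y"
  shows "induced_map X f \<in> hom (fundamental_group Y b) (fundamental_group X (f b))"
proof (rule homI)
  fix x assume "x \<in> carrier (fundamental_group Y b)"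
  then obtain p where p: "pathin Y p" "p 0 = b" "p 1 = b" "x = path_class Y p"
    by (metis loop_class_cases)
  then show "induced_map X f x \<in> carrier (fundamental_group X (f b))"
    using assms by (simp add: induced_class loop_class_in pathin_compose)
next
  fix x y assume "x \<in> carrier (fundamental_group Y b)" "y \<in> carrier (fundamental_group Y b)"
  then obtain p q where pq: "pathin Y p" "p 0 = b" "p 1 = b" "x = path_class Y p"
    "pathin Y q" "q 0 = b" "q 1 = b" "y = path_class Y q"
    by (metis loop_class_cases)
  then show "induced_map X f (x \<otimes>\<^bsub>fundamental_group Y b\<^esub> y) =
      induced_map X f x \<otimes>\<^bsub>fundamental_group X (f b)\<^esub> induced_map X f y"
    using assms by (simp add: mult_fg class_mult_class induced_class pathin_pconcat pathin_compose comp_pconcat)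
qed

lemma inv_fg:
  assumes "a \<in> topspace X" "pathin X p" "p 0 = a" "p 1 = a"
  shows "inv\<^bsub>fundamental_group X a\<^esub> (path_class X p) = path_class X (prev p)"
proof (rule group.inv_equality[OF fg_group[OF assms(1)]])
  show "path_class X (prev p) \<otimes>\<^bsub>fundamental_group X a\<^esub> path_class X p = \<one>\<^bsub>fundamental_group X a\<^esub>"
    using assms hp_linv[of X p] path_class_eq
    by (simp add: mult_fg one_fg class_mult_class pathin_prev)
qed (use assms in \<open>simp_all add: loop_class_in pathin_prev\<close>)

lemma hp_cancel:
  assumes "pathin X A" "pathin X d" "pathin X B" "A 1 = d 1" "B 0 = d 1"
  shows "homotopic_paths_in X (pconcat (pconcat A (prev d)) (pconcat d B)) (pconcat A B)"
proof -
  have pd: "pathin X (prev d)" using assms by (simp add: pathin_prev)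
  have 1: "homotopic_paths_in X (pconcat (pconcat A (prev d)) (pconcat d B))
             (pconcat A (pconcat (prev d) (pconcat d B)))"
    using assms pd by (intro hp_assoc) (auto simp: pathin_pconcat)
  have 2: "homotopic_paths_in X (pconcat (prev d) (pconcat d B)) (pconcat (pconcat (prev d) d) B)"
    using assms pd by (intro hp_sym[OF hp_assoc]) auto
  have 3: "homotopic_paths_in X (pconcat (pconcat (prev d) d) B) (pconcat (\<lambda>_. d 1) B)"
    using assms pd by (intro hp_concat hp_linv hp_refl) auto
  have 4: "homotopic_paths_in X (pconcat (\<lambda>_. d 1) B) B"
    using assms hp_lid[of X B] by simp
  have "homotopic_paths_in X (pconcat (prev d) (pconcat d B)) B"
    using 2 3 4 hp_trans by blast
  then have "homotopic_paths_in X (pconcat A (pconcat (prev d) (pconcat d B))) (pconcat A B)"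
    using assms by (intro hp_concat hp_refl) auto
  then show ?thesis using 1 hp_trans by blast
qed

lemma square_lemma:
  assumes H: "continuous_map (prod_topology (top_of_set {0..1}) X) X H"
    and H0: "\<And>x. H (0, x) = f x" and H1: "\<And>x. H (1, x) = x"
    and c: "pathin X c" "c 0 = a" "c 1 = a" and a: "a \<in> topspace X"
  shows "homotopic_paths_in X (pconcat (f \<circ> c) (\<lambda>t. H (t, a))) (pconcat (\<lambda>t. H (t, a)) c)"
proof -
  let ?S = "{0..1::real} \<times> {0..1::real}"
  let ?K = "\<lambda>z. H (fst z, c (snd z))"
  have top: "top_of_set ?S = prod_topology (top_of_set {0..1}) (top_of_set {0..1})"
    by (simp flip: subtopology_Times)
  have cK: "continuous_map (top_of_set ?S) X ?K"
    unfolding top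
  proof (rule continuous_map_compose[OF _ H, unfolded o_def])
    show "continuous_map (prod_topology (top_of_set {0..1}) (top_of_set {0..1}))
            (prod_topology (top_of_set {0..1}) X) (\<lambda>x. (fst x, c (snd x)))"
      unfolding continuous_map_paired
    proof (intro conjI)
      show "continuous_map (prod_topology (top_of_set {0..1}) (top_of_set {0..1})) (top_of_set {0..1}) fst"
        by (rule continuous_map_fst)
      show "continuous_map (prod_topology (top_of_set {0..1}) (top_of_set {0..1})) X (\<lambda>x. c (snd x))"
        by (rule continuous_map_compose[OF continuous_map_snd c(1)[unfolded pathin_def], unfolded o_def])
    qed
  qed
  let ?\<alpha> = "\<lambda>s::real. (max 0 (2 * s - 1), min 1 (2 * s))"
  let ?\<beta> = "\<lambda>s::real. (min 1 (2 * s), max 0 (2 * s - 1))"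
  have h: "homotopic_paths_in X (?K \<circ> ?\<alpha>) (?K \<circ> ?\<beta>)"
  proof (rule hp_convex[OF _ cK])
    show "convex ?S" by (intro convex_Times convex_real_interval)
    show "path ?\<alpha>" "path ?\<beta>" unfolding path_def by (intro continuous_intros)+
    show "?\<alpha> ` {0..1} \<subseteq> ?S" "?\<beta> ` {0..1} \<subseteq> ?S" by (auto simp: max_def min_def)
  qed auto
  have e1: "(?K \<circ> ?\<alpha>) s = pconcat (f \<circ> c) (\<lambda>t. H (t, a)) s" if "s \<in> {0..1}" for s
  proof -
    consider "s < 1/2" | "s = 1/2" | "s > 1/2" by linarith
    then show ?thesis
    proof cases
      case 2 then have e: "s = 1/2" .
      show ?thesis unfolding e using c by (simp add: pconcat_def H0)
    qed (use c in \<open>auto simp: pconcat_def H0 max_def min_def\<close>)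
  qed
  have e2: "(?K \<circ> ?\<beta>) s = pconcat (\<lambda>t. H (t, a)) c s" if "s \<in> {0..1}" for s
  proof -
    consider "s < 1/2" | "s = 1/2" | "s > 1/2" by linarith
    then show ?thesis
    proof cases
      case 2 then have e: "s = 1/2" .
      show ?thesis unfolding e using c by (simp add: pconcat_def H1)
    qed (use c in \<open>auto simp: pconcat_def H1 max_def min_def\<close>)
  qed
  have "homotopic_paths_in X (?K \<circ> ?\<alpha>) (pconcat (f \<circ> c) (\<lambda>t. H (t, a)))"
    by (rule hp_eq) (use hp_imp[OF h] e1 in auto)
  moreover have "homotopic_paths_in X (?K \<circ> ?\<beta>) (pconcat (\<lambda>t. H (t, a)) c)"
    by (rule hp_eq) (use hp_imp[OF h] e2 in auto)
  ultimately show ?thesis using h hp_sym hp_trans by blast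
qed


lemma tensor_iso:
  assumes G: "group G" and H: "group H" and F: "F \<in> hom H G"
    and surj: "\<And>x. x \<in> carrier G \<Longrightarrow> \<exists>h\<in>carrier H. F h = x"
    and l: "\<And>h c. h \<in> carrier H \<Longrightarrow> c \<in> carrier G \<Longrightarrow> l h c = F h \<otimes>\<^bsub>G\<^esub> c"
    and r: "r = monoid.mult G"
  shows "\<exists>\<phi>. biset_iso G G
     (tensor_set H (carrier G) (contra_right H l) (carrier G) l)
     (tensor_left H (carrier G) (contra_right H l) (carrier G) l (contra_left G r))
     (tensor_right H (carrier G) (contra_right H l) (carrier G) l r)
     (carrier G) (\<lambda>g x. g \<otimes>\<^bsub>G\<^esub> x) (\<lambda>x g. x \<otimes>\<^bsub>G\<^esub> g) \<phi>"
proof -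
  interpret G: group G by (rule G)
  interpret H: group H by (rule H)
  interpret FH: group_hom H G F by (rule group_hom.intro[OF H G]) (simp add: group_hom_axioms_def F)
  define T where "T = carrier G"
  define r1 where "r1 = contra_right H l"
  define E where "E = {((r1 b h, c), (b, l h c)) | b c h. b \<in> T \<and> c \<in> T \<and> h \<in> carrier H}"
  define R where "R = tensor_rel H T r1 T l"
  have R_def': "R = (E \<union> E\<inverse>)\<^sup>*" by (simp add: R_def tensor_rel_def E_def)
  define \<psi> where "\<psi> = (\<lambda>z. inv\<^bsub>G\<^esub> (fst z) \<otimes>\<^bsub>G\<^esub> snd z)"
  define cls where "cls v = {z \<in> T \<times> T. \<psi> z = v}" for v
  have r1_eq: "r1 b h = inv\<^bsub>G\<^esub> (F h) \<otimes>\<^bsub>G\<^esub> b" if "b \<in> T" "h \<in> carrier H" for b h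
    using that by (simp add: r1_def contra_right_def l T_def)
  have \<psi>T: "\<psi> z \<in> T" if "z \<in> T \<times> T" for z
    using that by (auto simp: \<psi>_def T_def)
  have Eprop: "u \<in> T \<times> T \<and> v \<in> T \<times> T \<and> \<psi> u = \<psi> v" if uv: "(u, v) \<in> E" for u v
  proof -
    obtain b c h where bch: "u = (r1 b h, c)" "v = (b, l h c)" "b \<in> T" "c \<in> T" "h \<in> carrier H"
      using uv unfolding E_def by blast
    have Fh: "F h \<in> carrier G" using bch by simp
    show ?thesis using bch Fh
      by (auto simp: r1_eq l \<psi>_def T_def G.inv_mult_group G.m_assoc)
  qed
  have A: "y \<in> T \<times> T \<and> \<psi> y = \<psi> x" if "(x, y) \<in> R" "x \<in> T \<times> T" for x y
    using that(1) unfolding R_def'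
  proof (induction rule: rtrancl_induct)
    case base then show ?case using that(2) by simp
  next
    case (step y z)
    then have "(y, z) \<in> E \<or> (z, y) \<in> E" by blast
    then show ?case using Eprop[of y z] Eprop[of z y] step.IH by auto
  qed
  have B: "(x, (\<one>\<^bsub>G\<^esub>, \<psi> x)) \<in> R" if xT: "x \<in> T \<times> T" for x
  proof -
    obtain b c where bc: "x = (b, c)" "b \<in> T" "c \<in> T" using xT by auto
    obtain h where h: "h \<in> carrier H" "F h = inv\<^bsub>G\<^esub> b" using surj[of "inv\<^bsub>G\<^esub> b"] bc by (auto simp: T_def)
    have "((r1 \<one>\<^bsub>G\<^esub> h, c), (\<one>\<^bsub>G\<^esub>, l h c)) \<in> E"
      unfolding E_def using bc h by (auto simp: T_def)
    moreover have "r1 \<one>\<^bsub>G\<^esub> h = b" using h bc by (simp add: r1_eq T_def)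
    moreover have "l h c = \<psi> x" using h bc by (simp add: l \<psi>_def T_def)
    ultimately have "(x, (\<one>\<^bsub>G\<^esub>, \<psi> x)) \<in> E" using bc by simp
    then show ?thesis unfolding R_def' by blast
  qed
  have symR: "sym R" unfolding R_def' by (intro sym_rtrancl sym_Un_converse)
  have transR: "trans R" unfolding R_def' by (rule trans_rtrancl)
  have Cl: "R `` {x} = cls (\<psi> x)" if "x \<in> T \<times> T" for x
  proof
    show "R `` {x} \<subseteq> cls (\<psi> x)" using A that by (auto simp: cls_def)
    show "cls (\<psi> x) \<subseteq> R `` {x}"
    proof
      fix z assume z: "z \<in> cls (\<psi> x)"
      then have "z \<in> T \<times> T" "\<psi> z = \<psi> x" by (auto simp: cls_def)
      then have "(z, (\<one>\<^bsub>G\<^esub>, \<psi> x)) \<in> R" using B by metis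
      then have "((\<one>\<^bsub>G\<^esub>, \<psi> x), z) \<in> R" using symR by (meson symD)
      then show "z \<in> R `` {x}" using B[OF that] transR by (meson ImageI insertI1 transD)
    qed
  qed
  have \<psi>1: "\<psi> (\<one>\<^bsub>G\<^esub>, v) = v" if "v \<in> T" for v using that by (simp add: \<psi>_def T_def)
  have one_in: "(\<one>\<^bsub>G\<^esub>, v) \<in> cls v" if "v \<in> T" for v using that \<psi>1 by (simp add: cls_def T_def)
  have TS: "tensor_set H T r1 T l = cls ` T"
  proof
    show "tensor_set H T r1 T l \<subseteq> cls ` T"
      unfolding tensor_set_def quotient_def R_def[symmetric] using Cl \<psi>T by blast
    show "cls ` T \<subseteq> tensor_set H T r1 T l"
    proof
      fix Q assume "Q \<in> cls ` T"
      then obtain v where v: "v \<in> T" "Q = cls v" by blast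
      then have "Q = R `` {(\<one>\<^bsub>G\<^esub>, v)}" using Cl[of "(\<one>\<^bsub>G\<^esub>, v)"] \<psi>1 by (simp add: T_def)
      then show "Q \<in> tensor_set H T r1 T l"
        unfolding tensor_set_def quotient_def R_def[symmetric] using v by (auto simp: T_def)
    qed
  qed
  define \<phi> where "\<phi> Q = \<psi> (SOME z. z \<in> Q)" for Q
  have \<phi>cls: "\<phi> (cls v) = v" if "v \<in> T" for v
  proof -
    have "(SOME z. z \<in> cls v) \<in> cls v" using one_in[OF that] by (rule someI)
    then show ?thesis by (simp add: \<phi>_def cls_def)
  qed
  have Un_cls: "\<Union>{R `` {k b c} | b c. (b, c) \<in> cls v} = cls w"
    if vT: "v \<in> T" and kk: "\<And>b c. (b, c) \<in> cls v \<Longrightarrow> k b c \<in> T \<times> T \<and> \<psi> (k b c) = w" for v w k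
  proof -
    have "R `` {k b c} = cls w" if "(b, c) \<in> cls v" for b c
      using Cl kk[OF that] by metis
    then show ?thesis using one_in[OF vT] by blast
  qed
  show ?thesis
  proof (intro exI[of _ \<phi>])
    show "biset_iso G G
     (tensor_set H (carrier G) (contra_right H l) (carrier G) l)
     (tensor_left H (carrier G) (contra_right H l) (carrier G) l (contra_left G r))
     (tensor_right H (carrier G) (contra_right H l) (carrier G) l r)
     (carrier G) (\<lambda>g x. g \<otimes>\<^bsub>G\<^esub> x) (\<lambda>x g. x \<otimes>\<^bsub>G\<^esub> g) \<phi>"
      unfolding biset_iso_def T_def[symmetric] r1_def[symmetric] TS
    proof (intro conjI ballI)
      show "bij_betw \<phi> (cls ` T) T"
        unfolding bij_betw_def
      proof
        show "inj_on \<phi> (cls ` T)" by (rule inj_onI) (auto simp: \<phi>cls)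
        show "\<phi> ` cls ` T = T" using \<phi>cls by (auto simp: image_iff)
      qed
    next
      fix g Q assume g: "g \<in> T" and "Q \<in> cls ` T"
      then obtain v where v: "v \<in> T" "Q = cls v" by blast
      have "tensor_left H T r1 T l (contra_left G r) g Q = cls (g \<otimes>\<^bsub>G\<^esub> v)"
        unfolding tensor_left_def R_def[symmetric] v(2)
      proof (rule Un_cls[OF v(1)])
        fix b c assume "(b, c) \<in> cls v"
        then have bc: "b \<in> T" "c \<in> T" "inv\<^bsub>G\<^esub> b \<otimes>\<^bsub>G\<^esub> c = v" by (auto simp: cls_def \<psi>_def)
        then show "(contra_left G r g b, c) \<in> T \<times> T \<and> \<psi> (contra_left G r g b, c) = g \<otimes>\<^bsub>G\<^esub> v"
          using g by (auto simp: contra_left_def r \<psi>_def T_def G.inv_mult_group G.m_assoc)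
      qed
      then show "\<phi> (tensor_left H T r1 T l (contra_left G r) g Q) = g \<otimes>\<^bsub>G\<^esub> \<phi> Q"
        using g v by (simp add: \<phi>cls T_def)
    next
      fix k Q assume k: "k \<in> T" and "Q \<in> cls ` T"
      then obtain v where v: "v \<in> T" "Q = cls v" by blast
      have "tensor_right H T r1 T l r Q k = cls (v \<otimes>\<^bsub>G\<^esub> k)"
        unfolding tensor_right_def R_def[symmetric] v(2)
      proof (rule Un_cls[OF v(1)])
        fix b c assume "(b, c) \<in> cls v"
        then have bc: "b \<in> T" "c \<in> T" "inv\<^bsub>G\<^esub> b \<otimes>\<^bsub>G\<^esub> c = v" by (auto simp: cls_def \<psi>_def)
        then show "(b, r c k) \<in> T \<times> T \<and> \<psi> (b, r c k) = v \<otimes>\<^bsub>G\<^esub> k"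
          using k by (auto simp: r \<psi>_def T_def G.m_assoc)
      qed
      then show "\<phi> (tensor_right H T r1 T l r Q k) = \<phi> Q \<otimes>\<^bsub>G\<^esub> k"
        using k v by (simp add: \<phi>cls T_def)
    qed
  qed
qed


lemma key_chain:
  assumes "pathin X D" "pathin X e" "pathin X \<gamma>" "pathin X c"
    "e 0 = D 1" "e 1 = D 1" "\<gamma> 0 = D 1" "c 0 = \<gamma> 1"
    and star: "homotopic_paths_in X (pconcat e \<gamma>) (pconcat \<gamma> c)"
  shows "homotopic_paths_in X (pconcat (pconcat (pconcat D e) (prev D)) (pconcat D \<gamma>)) (pconcat (pconcat D \<gamma>) c)"
proof -
  have 1: "homotopic_paths_in X (pconcat (pconcat (pconcat D e) (prev D)) (pconcat D \<gamma>)) (pconcat (pconcat D e) \<gamma>)"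
    using assms by (intro hp_cancel) (auto simp: pathin_pconcat)
  have 2: "homotopic_paths_in X (pconcat (pconcat D e) \<gamma>) (pconcat D (pconcat e \<gamma>))"
    using assms by (intro hp_assoc) auto
  have 3: "homotopic_paths_in X (pconcat D (pconcat e \<gamma>)) (pconcat D (pconcat \<gamma> c))"
    by (rule hp_concat[OF hp_refl star]) (use assms in auto)
  have 4: "homotopic_paths_in X (pconcat D (pconcat \<gamma> c)) (pconcat (pconcat D \<gamma>) c)"
    using assms by (intro hp_sym[OF hp_assoc]) auto
  show ?thesis using 1 2 3 4 hp_trans by blast
qed

lemma conj_chain:
  assumes "pathin X d" "pathin X c" "pathin X c'" "c 0 = d 1" "c 1 = d 1" "c' 0 = d 1" "c' 1 = d 1"
  shows "homotopic_paths_in X (pconcat (pconcat (pconcat d c) (prev d)) (pconcat (pconcat d c') (prev d)))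
           (pconcat (pconcat d (pconcat c c')) (prev d))"
proof -
  have pd: "pathin X (prev d)" using assms by (simp add: pathin_prev)
  have 1: "homotopic_paths_in X (pconcat (pconcat (pconcat d c) (prev d)) (pconcat (pconcat d c') (prev d)))
            (pconcat (pconcat (pconcat d c) (prev d)) (pconcat d (pconcat c' (prev d))))"
    using assms pd by (intro hp_concat[OF hp_refl hp_assoc]) (auto simp: pathin_pconcat)
  have 2: "homotopic_paths_in X (pconcat (pconcat (pconcat d c) (prev d)) (pconcat d (pconcat c' (prev d))))
            (pconcat (pconcat d c) (pconcat c' (prev d)))"
    using assms pd by (intro hp_cancel) (auto simp: pathin_pconcat)
  have 3: "homotopic_paths_in X (pconcat (pconcat d c) (pconcat c' (prev d)))
            (pconcat (pconcat (pconcat d c) c') (prev d))"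
    using assms pd by (intro hp_sym[OF hp_assoc]) (auto simp: pathin_pconcat)
  have 4: "homotopic_paths_in X (pconcat (pconcat (pconcat d c) c') (prev d))
            (pconcat (pconcat d (pconcat c c')) (prev d))"
    using assms pd by (intro hp_concat[OF hp_assoc hp_refl]) (auto simp: pathin_pconcat)
  show ?thesis using 1 2 3 4 hp_trans by blast
qed

lemma conj_hom:
  assumes "pathin Y d" "d 0 = b" "d 1 = b'"
  shows "(\<lambda>x. class_mult Y (class_mult Y (path_class Y d) x) (path_class Y (prev d)))
           \<in> hom (fundamental_group Y b') (fundamental_group Y b)"
proof (rule homI)
  have pd: "pathin Y (prev d)" using assms by (simp add: pathin_prev)
  fix x assume "x \<in> carrier (fundamental_group Y b')"
  then obtain p where p: "pathin Y p" "p 0 = b'" "p 1 = b'" "x = path_class Y p"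
    by (metis loop_class_cases)
  then show "class_mult Y (class_mult Y (path_class Y d) x) (path_class Y (prev d)) \<in> carrier (fundamental_group Y b)"
    using assms pd by (simp add: class_mult_class loop_class_in pathin_pconcat)
next
  have pd: "pathin Y (prev d)" using assms by (simp add: pathin_prev)
  fix x y assume "x \<in> carrier (fundamental_group Y b')" "y \<in> carrier (fundamental_group Y b')"
  then obtain p q where pq: "pathin Y p" "p 0 = b'" "p 1 = b'" "x = path_class Y p"
    "pathin Y q" "q 0 = b'" "q 1 = b'" "y = path_class Y q"
    by (metis loop_class_cases)
  have "class_mult Y (class_mult Y (path_class Y d) (x \<otimes>\<^bsub>fundamental_group Y b'\<^esub> y)) (path_class Y (prev d))
     = path_class Y (pconcat (pconcat d (pconcat p q)) (prev d))"
    using pq assms pd by (simp add: mult_fg class_mult_class pathin_pconcat)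
  also have "\<dots> = path_class Y (pconcat (pconcat (pconcat d p) (prev d)) (pconcat (pconcat d q) (prev d)))"
    using pq assms by (intro path_class_eq hp_sym[OF conj_chain]) auto
  also have "\<dots> = class_mult Y (class_mult Y (path_class Y d) x) (path_class Y (prev d)) \<otimes>\<^bsub>fundamental_group Y b\<^esub>
      class_mult Y (class_mult Y (path_class Y d) y) (path_class Y (prev d))"
    using pq assms pd by (simp add: mult_fg class_mult_class pathin_pconcat)
  finally show "class_mult Y (class_mult Y (path_class Y d) (x \<otimes>\<^bsub>fundamental_group Y b'\<^esub> y)) (path_class Y (prev d))
     = class_mult Y (class_mult Y (path_class Y d) x) (path_class Y (prev d)) \<otimes>\<^bsub>fundamental_group Y b\<^esub>
      class_mult Y (class_mult Y (path_class Y d) y) (path_class Y (prev d))" .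
qed

theorem mainTheorem20:
  fixes Y :: "'b topology" and X :: "'a topology" and f :: "'b \<Rightarrow> 'a" and dag :: 'b
  assumes "generic_map Y X f"
    and "path_connected_space Y" and "path_connected_space X"
    and "dag \<in> topspace Y"
  shows "(induced_map X f \<in> hom (fundamental_group Y dag) (fundamental_group X (f dag)) \<and>
         (\<exists>s\<in>hom (fundamental_group X (f dag)) (fundamental_group Y dag).
            \<forall>x\<in>carrier (fundamental_group X (f dag)). induced_map X f (s x) = x)) \<and>
         right_principal (fundamental_group X (f dag))
           (map_biset_set X f dag (f dag)) (map_biset_right X) \<and>
         (\<exists>\<phi>. biset_iso (fundamental_group X (f dag)) (fundamental_group X (f dag))
           (tensor_set (fundamental_group Y dag) (map_biset_set X f dag (f dag))
              (contra_right (fundamental_group Y dag) (map_biset_left X f))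
              (map_biset_set X f dag (f dag)) (map_biset_left X f))
           (tensor_left (fundamental_group Y dag) (map_biset_set X f dag (f dag))
              (contra_right (fundamental_group Y dag) (map_biset_left X f))
              (map_biset_set X f dag (f dag)) (map_biset_left X f)
              (contra_left (fundamental_group X (f dag)) (map_biset_right X)))
           (tensor_right (fundamental_group Y dag) (map_biset_set X f dag (f dag))
              (contra_right (fundamental_group Y dag) (map_biset_left X f))
              (map_biset_set X f dag (f dag)) (map_biset_left X f) (map_biset_right X))
           (carrier (fundamental_group X (f dag)))
           (\<lambda>g x. g \<otimes>\<^bsub>fundamental_group X (f dag)\<^esub> x)
           (\<lambda>x g. x \<otimes>\<^bsub>fundamental_group X (f dag)\<^esub> g)
           \<phi>)"
  proof -
  note gm = assms(1)[unfolded generic_map_def]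
  have cf: "continuous_map Y X f" using gm by blast
  obtain g where cg: "continuous_map X Y g"
    and htp: "homotopic_with (\<lambda>h. homeomorphic_map X X h) X X (f \<circ> g) id"
    using gm by blast
  obtain H where H: "continuous_map (prod_topology (top_of_set {0..1::real}) X) X H"
    and H0: "\<And>x. H (0, x) = (f \<circ> g) x" and H1: "\<And>x. H (1, x) = id x"
    using htp unfolding homotopic_with_def by auto
  define a where "a = f dag"
  have aX: "a \<in> topspace X" using cf assms(4) by (auto simp: a_def continuous_map_def)
  have gaY: "g a \<in> topspace Y" using cg aX by (auto simp: continuous_map_def)
  define G where "G = fundamental_group X a"
  define HY where "HY = fundamental_group Y dag"
  interpret G: group G unfolding G_def by (rule fg_group[OF aX])
  interpret HY: group HY unfolding HY_def by (rule fg_group[OF assms(4)])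
  define F where "F = induced_map X f"
  have Fhom: "F \<in> hom HY G" unfolding F_def HY_def G_def a_def by (rule induced_hom[OF cf assms(4)])
  define \<gamma> where "\<gamma> = (\<lambda>t. H (t, a))"
  have p\<gamma>: "pathin X \<gamma>"
  proof -
    have "continuous_map (top_of_set {0..1}) (prod_topology (top_of_set {0..1}) X) (\<lambda>t. (t, a))"
      unfolding continuous_map_paired using aX by simp
    then show ?thesis unfolding pathin_def \<gamma>_def
      by (rule continuous_map_compose[OF _ H, unfolded o_def])
  qed
  have \<gamma>0: "\<gamma> 0 = f (g a)" and \<gamma>1: "\<gamma> 1 = a" by (auto simp: \<gamma>_def H0 H1)
  obtain \<delta> where p\<delta>: "pathin Y \<delta>" and \<delta>0: "\<delta> 0 = dag" and \<delta>1: "\<delta> 1 = g a"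
    using assms(2) assms(4) gaY unfolding path_connected_space_def by blast
  define Sg where "Sg = induced_map Y g"
  have Sghom: "Sg \<in> hom G (fundamental_group Y (g a))"
    unfolding Sg_def G_def by (rule induced_hom[OF cg aX])
  define Cj where "Cj = (\<lambda>x. class_mult Y (class_mult Y (path_class Y \<delta>) x) (path_class Y (prev \<delta>)))"
  have Cjhom: "Cj \<in> hom (fundamental_group Y (g a)) HY"
    unfolding Cj_def HY_def by (rule conj_hom[OF p\<delta> \<delta>0 \<delta>1])
  define S where "S = Cj \<circ> Sg"
  have Shom: "S \<in> hom G HY" unfolding S_def by (rule hom_compose[OF Sghom Cjhom])
  define u where "u = path_class X (pconcat (f \<circ> \<delta>) \<gamma>)"
  have pf\<delta>: "pathin X (f \<circ> \<delta>)" using p\<delta> cf by (rule pathin_compose)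
  have uG: "u \<in> carrier G"
    unfolding u_def G_def using pf\<delta> p\<gamma> \<delta>0 \<delta>1 \<gamma>0 \<gamma>1
    by (intro loop_class_in) (auto simp: pathin_pconcat a_def)
  have cu: "u \<otimes>\<^bsub>G\<^esub> (inv\<^bsub>G\<^esub> u \<otimes>\<^bsub>G\<^esub> z) = z" if "z \<in> carrier G" for z
    using that uG by (simp add: G.m_assoc[symmetric])
  have key: "F (S y) \<otimes>\<^bsub>G\<^esub> u = u \<otimes>\<^bsub>G\<^esub> y" if yG: "y \<in> carrier G" for y
  proof -
    obtain c where c: "pathin X c" "c 0 = a" "c 1 = a" "y = path_class X c"
      using yG unfolding G_def by (metis loop_class_cases)
    have pgc: "pathin Y (g \<circ> c)" using c(1) cg by (rule pathin_compose)
    have pfgc: "pathin X (f \<circ> (g \<circ> c))" using pgc cf by (rule pathin_compose)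
    have pd: "pathin Y (prev \<delta>)" using p\<delta> by (rule pathin_prev)
    have "S y = path_class Y (pconcat (pconcat \<delta> (g \<circ> c)) (prev \<delta>))"
      using c p\<delta> pgc pd \<delta>1 by (simp add: S_def Cj_def Sg_def induced_class[OF cg] class_mult_class pathin_pconcat)
    then have "F (S y) = path_class X (pconcat (pconcat (f \<circ> \<delta>) (f \<circ> (g \<circ> c))) (prev (f \<circ> \<delta>)))"
      using c p\<delta> pgc pd \<delta>1 by (simp add: F_def induced_class[OF cf] pathin_pconcat comp_pconcat comp_prev)
    then have "F (S y) \<otimes>\<^bsub>G\<^esub> u = path_class X (pconcat (pconcat (pconcat (f \<circ> \<delta>) (f \<circ> (g \<circ> c))) (prev (f \<circ> \<delta>))) (pconcat (f \<circ> \<delta>) \<gamma>))"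
      using c pf\<delta> pfgc p\<gamma> \<delta>1 \<gamma>0
      by (simp add: u_def G_def mult_fg class_mult_class pathin_pconcat pathin_prev)
    also have "\<dots> = path_class X (pconcat (pconcat (f \<circ> \<delta>) \<gamma>) c)"
    proof (rule path_class_eq, rule key_chain)
      have "homotopic_paths_in X (pconcat ((f \<circ> g) \<circ> c) \<gamma>) (pconcat \<gamma> c)"
        unfolding \<gamma>_def by (rule square_lemma[OF H _ _ c(1-3) aX]) (auto simp: H0 H1)
      then show "homotopic_paths_in X (pconcat (f \<circ> (g \<circ> c)) \<gamma>) (pconcat \<gamma> c)"
        by (simp add: o_assoc)
    qed (use c pf\<delta> pfgc p\<gamma> \<delta>1 \<gamma>0 \<gamma>1 in auto)
    also have "\<dots> = u \<otimes>\<^bsub>G\<^esub> y"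
      using c pf\<delta> p\<gamma> \<delta>1 \<gamma>0 \<gamma>1
      by (simp add: u_def G_def mult_fg class_mult_class pathin_pconcat)
    finally show ?thesis .
  qed
  define In where "In = (\<lambda>x. inv\<^bsub>G\<^esub> u \<otimes>\<^bsub>G\<^esub> x \<otimes>\<^bsub>G\<^esub> u)"
  have Inhom: "In \<in> hom G G"
  proof (rule homI)
    fix x assume "x \<in> carrier G" then show "In x \<in> carrier G" using uG by (simp add: In_def)
  next
    fix x y assume xy: "x \<in> carrier G" "y \<in> carrier G"
    have "In x \<otimes>\<^bsub>G\<^esub> In y = inv\<^bsub>G\<^esub> u \<otimes>\<^bsub>G\<^esub> x \<otimes>\<^bsub>G\<^esub> (u \<otimes>\<^bsub>G\<^esub> inv\<^bsub>G\<^esub> u) \<otimes>\<^bsub>G\<^esub> y \<otimes>\<^bsub>G\<^esub> u"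
      using xy uG by (simp add: In_def G.m_assoc cu)
    also have "\<dots> = In (x \<otimes>\<^bsub>G\<^esub> y)" using xy uG by (simp add: In_def G.m_assoc cu)
    finally show "In (x \<otimes>\<^bsub>G\<^esub> y) = In x \<otimes>\<^bsub>G\<^esub> In y" by simp
  qed
  define s where "s = S \<circ> In"
  have shom: "s \<in> hom G HY" unfolding s_def by (rule hom_compose[OF Inhom Shom])
  have Fs: "F (s x) = x" if xG: "x \<in> carrier G" for x
  proof -
    have InG: "In x \<in> carrier G" using xG uG by (simp add: In_def)
    have SG: "F (S (In x)) \<in> carrier G"
      using InG Shom Fhom by (meson hom_in_carrier)
    have "F (S (In x)) \<otimes>\<^bsub>G\<^esub> u = u \<otimes>\<^bsub>G\<^esub> In x" by (rule key[OF InG])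
    also have "\<dots> = x \<otimes>\<^bsub>G\<^esub> u"
      using xG uG cu[of "x \<otimes>\<^bsub>G\<^esub> u"] by (simp add: In_def G.m_assoc)
    finally have "F (S (In x)) \<otimes>\<^bsub>G\<^esub> u = x \<otimes>\<^bsub>G\<^esub> u" .
    then show ?thesis using SG xG uG by (simp add: s_def)
  qed
  have mr: "map_biset_right X = monoid.mult G"
    by (simp add: G_def mult_fg fun_eq_iff map_biset_right_def class_mult_def)
  have bs: "map_biset_set X f dag (f dag) = carrier G"
    by (simp add: map_biset_set_def G_def carrier_fg a_def)
  have part1: "induced_map X f \<in> hom HY G \<and> (\<exists>s\<in>hom G HY. \<forall>x\<in>carrier G. induced_map X f (s x) = x)"
    using Fhom shom Fs unfolding F_def by blast
  have part2: "right_principal G (carrier G) (monoid.mult G)"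
    unfolding right_principal_def
  proof (intro ballI)
    fix x y assume xy0: "x \<in> carrier G" "y \<in> carrier G"
    show "\<exists>!g. g \<in> carrier G \<and> x \<otimes>\<^bsub>G\<^esub> g = y"
    proof (intro ex1I[of _ "inv\<^bsub>G\<^esub> x \<otimes>\<^bsub>G\<^esub> y"] conjI)
      note xy = xy0
      show "inv\<^bsub>G\<^esub> x \<otimes>\<^bsub>G\<^esub> y \<in> carrier G" using xy by simp
      show "x \<otimes>\<^bsub>G\<^esub> (inv\<^bsub>G\<^esub> x \<otimes>\<^bsub>G\<^esub> y) = y"
        using xy by (simp add: G.m_assoc[symmetric])
      fix g assume g: "g \<in> carrier G \<and> x \<otimes>\<^bsub>G\<^esub> g = y"
      then show "g = inv\<^bsub>G\<^esub> x \<otimes>\<^bsub>G\<^esub> y" using xy G.inv_solve_left by blast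
    qed
  qed
  have lF: "map_biset_left X f h c = F h \<otimes>\<^bsub>G\<^esub> c" if hc: "h \<in> carrier HY" "c \<in> carrier G" for h c
  proof -
    obtain p where p: "pathin Y p" "p 0 = dag" "p 1 = dag" "h = path_class Y p"
      using hc(1) unfolding HY_def by (metis loop_class_cases)
    obtain q where q: "pathin X q" "q 0 = a" "q 1 = a" "c = path_class X q"
      using hc(2) unfolding G_def by (metis loop_class_cases)
    show ?thesis using p q cf
      by (simp add: biset_left_class F_def induced_class G_def mult_fg class_mult_class pathin_compose a_def)
  qed
  have part3: "\<exists>\<phi>. biset_iso G G
     (tensor_set HY (carrier G) (contra_right HY (map_biset_left X f)) (carrier G) (map_biset_left X f))
     (tensor_left HY (carrier G) (contra_right HY (map_biset_left X f)) (carrier G) (map_biset_left X f) (contra_left G (map_biset_right X)))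
     (tensor_right HY (carrier G) (contra_right HY (map_biset_left X f)) (carrier G) (map_biset_left X f) (map_biset_right X))
     (carrier G) (\<lambda>g x. g \<otimes>\<^bsub>G\<^esub> x) (\<lambda>x g. x \<otimes>\<^bsub>G\<^esub> g) \<phi>"
  proof (rule tensor_iso[OF G.group_axioms HY.group_axioms Fhom _ lF mr])
    fix x assume "x \<in> carrier G"
    then show "\<exists>h\<in>carrier HY. F h = x" using Fs shom by (metis hom_in_carrier)
  qed
  have bs': "map_biset_set X f dag a = carrier G"
    by (simp add: map_biset_set_def G_def carrier_fg a_def)
  show ?thesis
    using part1 part2 part3 unfolding a_def[symmetric] G_def[symmetric] HY_def[symmetric] bs' mr
    by blast
qed

end
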